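(* For all positive integers $n$ and $k$, $$\sum_{i=1}^{k}\frac{(-1)^{i-1}}{i}\binom{in}{k}\binom{k}{i}=\frac{(-1)^{k-1}n}{k}.$$
   Context: Binomial coefficients $\binom{m}{j}$ for nonnegative integers $m,j$ are the usual ones, with $\binom{m}{j}=0$ when $j>m$. *)

theory Defs
  imports Complex_Main
begin

end

theory Submission imports Defs "HOL-Computational_Algebra.Polynomial" begin

lemma alt_step:
  fixes f :: "nat \<Rightarrow> real"
  shows "(\<Sum>i\<le>Suc k. (-1)^i * real (Suc k choose i) * f i)
       = - (\<Sum>i\<le>k. (-1)^i * real (k choose i) * (f (Suc i) - f i))"
proof -
  have "(\<Sum>i\<le>Suc k. (-1)^i * real (Suc k choose i) * f i)
      = f 0 + (\<Sum>i\<le>k. (-1)^(Suc i) * real (Suc k choose Suc i) * f (Suc i))"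
    by (subst sum.atMost_Suc_shift) simp
  also have "\<dots> = f 0 + (\<Sum>i\<le>k. (-1)^(Suc i) * real (k choose Suc i) * f (Suc i))
                 + (\<Sum>i\<le>k. (-1)^(Suc i) * real (k choose i) * f (Suc i))"
    by (simp add: sum.distrib[symmetric] algebra_simps)
  also have "f 0 + (\<Sum>i\<le>k. (-1)^(Suc i) * real (k choose Suc i) * f (Suc i))
       = (\<Sum>i\<le>Suc k. (-1)^i * real (k choose i) * f i)"
    by (subst sum.atMost_Suc_shift) simp
  also have "\<dots> = (\<Sum>i\<le>k. (-1)^i * real (k choose i) * f i)"
    by simp
  finally have eq: "(\<Sum>i\<le>Suc k. (-1)^i * real (Suc k choose i) * f i) = (\<Sum>i\<le>k. (-1)^i * real (k choose i) * f i) + (\<Sum>i\<le>k. (-1)^(Suc i) * real (k choose i) * f (Suc i))" .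
  have "- (\<Sum>i\<le>k. (-1)^i * real (k choose i) * (f (Suc i) - f i)) = (\<Sum>i\<le>k. (-1)^i * real (k choose i) * f i - (-1)^i * real (k choose i) * f (Suc i))"
    by (simp add: sum_negf[symmetric] algebra_simps del: sum_negf)
  also have "\<dots> = (\<Sum>i\<le>k. (-1)^i * real (k choose i) * f i) + (\<Sum>i\<le>k. (-1)^(Suc i) * real (k choose i) * f (Suc i))"
    by (simp add: sum_subtractf sum_negf)
  finally show ?thesis using eq by simp
qed

lemma alt_pow: "j < k \<Longrightarrow> (\<Sum>i\<le>k. (-1::real)^i * real (k choose i) * real i ^ j) = 0"
proof (induction k arbitrary: j)
  case 0 then show ?case by simp
next
  case (Suc k)
  have d: "real (Suc i) ^ j - real i ^ j = (\<Sum>l<j. real (j choose l) * real i ^ l)" for i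
  proof -
    have "real (Suc i) ^ j = (real i + 1) ^ j" by (metis of_nat_Suc add.commute)
    also have "\<dots> = (\<Sum>l\<le>j. real (j choose l) * real i ^ l)"
      by (simp only: binomial_ring power_one mult_1_right mult_1_left mult.commute)
    also have "\<dots> = (\<Sum>l<j. real (j choose l) * real i ^ l) + real i ^ j"
      by (simp add: lessThan_Suc_atMost[symmetric])
    finally show ?thesis by simp
  qed
  have "(\<Sum>i\<le>Suc k. (-1::real)^i * real (Suc k choose i) * real i ^ j)
     = - (\<Sum>i\<le>k. (-1)^i * real (k choose i) * (\<Sum>l<j. real (j choose l) * real i ^ l))"
    by (subst alt_step) (simp only: d)
  also have "\<dots> = - (\<Sum>l<j. real (j choose l) * (\<Sum>i\<le>k. (-1)^i * real (k choose i) * real i ^ l))"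
    by (simp add: sum_distrib_left sum_distrib_right algebra_simps sum.swap[of _ "{..<j}"])
  also have "\<dots> = 0"
    using Suc by (simp add: sum.neutral)
  finally show ?case .
qed

lemma alt_poly: "degree p < k \<Longrightarrow> (\<Sum>i\<le>k. (-1::real)^i * real (k choose i) * poly p (real i)) = 0"
proof -
  assume a: "degree p < k"
  have "(\<Sum>i\<le>k. (-1::real)^i * real (k choose i) * poly p (real i))
      = (\<Sum>j\<le>degree p. coeff p j * (\<Sum>i\<le>k. (-1::real)^i * real (k choose i) * real i ^ j))"
    by (simp add: poly_altdef sum_distrib_left sum_distrib_right algebra_simps sum.swap[of _ "{..k}"])
  also have "\<dots> = 0" using a by (intro sum.neutral) (auto intro!: alt_pow)
  finally show ?thesis .
qed

theorem mainTheorem6: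
  fixes n k :: nat
  assumes "n \<ge> 1" and "k \<ge> 1"
  shows "(\<Sum>i=1..k. (-1::real) ^ (i - 1) / real i * real ((i * n) choose k) * real (k choose i))
         = (-1::real) ^ (k - 1) * real n / real k"
proof -
  define m where "m = k - 1"
  have km: "k = Suc m" using assms m_def by simp
  define p :: "real poly" where "p = smult (1 / fact m) (\<Prod>t<m. [:-1 - real t, real n:])"
  have pp: "poly p x = (real n * x - 1) gchoose m" for x
  proof -
    have "poly p x = (\<Prod>t<m. real n * x - 1 - real t) / fact m"
      by (simp add: p_def poly_prod algebra_simps)
    also have "\<dots> = (real n * x - 1) gchoose m"
      using gbinomial_mult_fact[of m "real n * x - 1"]
      by (simp add: atLeast0LessThan field_simps)
    finally show ?thesis .
  qed
  have dp: "degree p < k"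
  proof -
    have "degree (\<Prod>t<m. [:-1 - real t, real n:]) \<le> (\<Sum>t<m. degree [:-1 - real t, real n:])"
      using degree_prod_sum_le[of "{..<m}" "\<lambda>t. [:-1 - real t, real n:]"] by (simp add: o_def)
    also have "\<dots> \<le> (\<Sum>t<m. 1)" by (intro sum_mono) simp
    finally show ?thesis by (simp add: p_def km)
  qed
  have p0: "poly p 0 = (-1)^m"
    using gbinomial_minus[of "1::real" m] binomial_gbinomial[of m m] by (simp add: pp)
  have tm: "(-1::real) ^ (i - 1) / real i * real ((i * n) choose k) * real (k choose i)
       = real n / real k * (- ((-1)^i * real (k choose i) * poly p (real i)))"
    if i: "i \<in> {1..k}" for i
  proof -
    have i1: "i \<ge> 1" using i by simp
    hence "i * n \<ge> 1" using assms by simp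
    then obtain q where q: "i * n = Suc q" by (metis Suc_le_D One_nat_def)
    have "real (Suc m) * real (Suc q choose Suc m) = real (Suc q) * real (q choose m)"
      using Suc_times_binomial[of m q] by (metis of_nat_mult)
    hence c: "real ((i*n) choose k) = real i * real n * real (q choose m) / real k"
      by (simp add: q km field_simps flip: q of_nat_mult)
    have "real (q choose m) = real q gchoose m" by (simp add: binomial_gbinomial)
    also have "real q = real n * real i - 1" using q by (metis diff_Suc_1 mult.commute of_nat_Suc of_nat_mult add_diff_cancel_left')
    finally have qc: "real (q choose m) = poly p (real i)" by (simp add: pp)
    have s: "(-1::real)^(i-1) = - ((-1::real)^i)" using i1 by (cases i) auto
    show ?thesis using i1 unfolding c qc s by (simp add: field_simps)
  qed
  have "(\<Sum>i=1..k. (-1::real) ^ (i - 1) / real i * real ((i * n) choose k) * real (k choose i))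
      = real n / real k * (- (\<Sum>i=1..k. (-1)^i * real (k choose i) * poly p (real i)))"
    by (simp only: sum.cong[OF refl tm] sum_distrib_left sum_negf mult_minus_right)
  also have "(\<Sum>i=1..k. (-1)^i * real (k choose i) * poly p (real i))
      = (\<Sum>i\<le>k. (-1::real)^i * real (k choose i) * poly p (real i)) - poly p 0"
  proof -
    have "{..k} = insert 0 {1..k}" by auto
    thus ?thesis by simp
  qed
  also have "\<dots> = - ((-1::real)^m)" using alt_poly[OF dp] p0 by simp
  finally show ?thesis by (simp add: m_def)
qed

end
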